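(* There exist instances (users, nonnegative embedding weights, features, and a linear graph-based classifier) of the myopic best-response dynamics described below, a user $i$, and a round $t$ such that $\hat y_i^{(t)}=-1$, user $i$ does not move (i.e., $x_i^{(t+1)}=x_i^{(t)}$), yet $\hat y_i^{(t+1)}=+1$.
   Context: Users $i\in[n]$ have features $x_i\in\mathbb{R}^\ell$; embeddings $\phi(x_i;x_{-i})=\widetilde{w}_{ii}x_i+\sum_{j\neq i}\widetilde{w}_{ji}x_j$ with $\widetilde{w}_{ji}\ge0$. Classifier: $h_{\theta,b}(x_i;x_{-i})=\mathrm{sign}(\theta^\top\phi(x_i;x_{-i})+b)$, $\mathrm{sign}(0)=+1$. Cost $c(x,x')=\|x-x'\|_2$. Dynamics: $x_i^{(0)}=x_i$; at each round all users update concurrently; user $i$ changes her features only if she is currently classified $-1$ and some $x'$ with $h(x';x^{(t)}_{-i})=+1$ has $c(x_i^{(t)},x')\le2$, in which case she moves to the minimum-cost such point (embedding exactly on the decision boundary); otherwise she stays. Predictions: $\hat y_i^{(t)}=h(x_i^{(t)};x_{-i}^{(t)})$. *)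

theory Defs
  imports Complex_Main
begin

text \<open>Users are indexed by 0..n-1; features live in R^l, represented as
functions nat => real that vanish outside {0..<l}. A profile X :: nat => nat => real
gives X i = feature vector of user i. Weights W j i stand for w~_{ji}.\<close>

definition vecs :: "nat \<Rightarrow> (nat \<Rightarrow> real) set" where
  "vecs l = {x. \<forall>k\<ge>l. x k = 0}"

definition cost :: "nat \<Rightarrow> (nat \<Rightarrow> real) \<Rightarrow> (nat \<Rightarrow> real) \<Rightarrow> real" where
  "cost l x y = sqrt (\<Sum>k<l. (x k - y k)^2)"

definition emb :: "nat \<Rightarrow> (nat \<Rightarrow> nat \<Rightarrow> real) \<Rightarrow> (nat \<Rightarrow> nat \<Rightarrow> real) \<Rightarrow> nat \<Rightarrow> (nat \<Rightarrow> real)" where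
  "emb n W X i = (\<lambda>k. \<Sum>j<n. W j i * X j k)"

definition clf :: "nat \<Rightarrow> nat \<Rightarrow> (nat \<Rightarrow> nat \<Rightarrow> real) \<Rightarrow> (nat \<Rightarrow> real) \<Rightarrow> real
    \<Rightarrow> (nat \<Rightarrow> nat \<Rightarrow> real) \<Rightarrow> nat \<Rightarrow> int" where
  "clf l n W theta b X i =
     (if (\<Sum>k<l. theta k * emb n W X i k) + b \<ge> 0 then 1 else -1)"

definition feasible :: "nat \<Rightarrow> nat \<Rightarrow> (nat \<Rightarrow> nat \<Rightarrow> real) \<Rightarrow> (nat \<Rightarrow> real) \<Rightarrow> real
    \<Rightarrow> (nat \<Rightarrow> nat \<Rightarrow> real) \<Rightarrow> nat \<Rightarrow> (nat \<Rightarrow> real) \<Rightarrow> bool" where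
  "feasible l n W theta b X i x' \<longleftrightarrow>
     x' \<in> vecs l \<and> clf l n W theta b (X(i := x')) i = 1 \<and> cost l (X i) x' \<le> 2"

definition best_resp :: "nat \<Rightarrow> nat \<Rightarrow> (nat \<Rightarrow> nat \<Rightarrow> real) \<Rightarrow> (nat \<Rightarrow> real) \<Rightarrow> real
    \<Rightarrow> (nat \<Rightarrow> nat \<Rightarrow> real) \<Rightarrow> nat \<Rightarrow> (nat \<Rightarrow> real) \<Rightarrow> bool" where
  "best_resp l n W theta b X i x' \<longleftrightarrow>
     feasible l n W theta b X i x' \<and>
     (\<forall>y. feasible l n W theta b X i y \<longrightarrow> cost l (X i) x' \<le> cost l (X i) y)"

definition step :: "nat \<Rightarrow> nat \<Rightarrow> (nat \<Rightarrow> nat \<Rightarrow> real) \<Rightarrow> (nat \<Rightarrow> real) \<Rightarrow> real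
    \<Rightarrow> (nat \<Rightarrow> nat \<Rightarrow> real) \<Rightarrow> (nat \<Rightarrow> nat \<Rightarrow> real) \<Rightarrow> bool" where
  "step l n W theta b X Y \<longleftrightarrow>
     (\<forall>i<n. if clf l n W theta b X i = -1 \<and> (\<exists>x'. feasible l n W theta b X i x')
            then best_resp l n W theta b X i (Y i)
            else Y i = X i)"

definition trajectory :: "nat \<Rightarrow> nat \<Rightarrow> (nat \<Rightarrow> nat \<Rightarrow> real) \<Rightarrow> (nat \<Rightarrow> real) \<Rightarrow> real
    \<Rightarrow> (nat \<Rightarrow> nat \<Rightarrow> nat \<Rightarrow> real) \<Rightarrow> bool" where
  "trajectory l n W theta b Xs \<longleftrightarrow>
     theta \<in> vecs l \<and> (\<forall>i<n. \<forall>j<n. W j i \<ge> 0) \<and> (\<forall>i<n. Xs 0 i \<in> vecs l) \<and>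
     (\<forall>t. step l n W theta b (Xs t) (Xs (Suc t)))"

end

theory Submission
  imports Defs
begin

definition WW :: "nat \<Rightarrow> nat \<Rightarrow> real" where
  "WW j i = (if j = 0 \<and> i = 0 then 1 else if j = 1 \<and> i = 0 then 20
             else if j = 1 \<and> i = 1 then 1 else 0)"
definition TH :: "nat \<Rightarrow> real" where "TH k = (if k = 0 then 1 else 0)"
definition X0 :: "nat \<Rightarrow> nat \<Rightarrow> real" where
  "X0 i k = (if k = 0 \<and> i = 1 then -1 else 0)"
definition X1 :: "nat \<Rightarrow> nat \<Rightarrow> real" where "X1 i k = 0"
definition XS :: "nat \<Rightarrow> nat \<Rightarrow> nat \<Rightarrow> real" where
  "XS t = (if t = 0 then X0 else X1)"

lemma sum2: "(\<Sum>j<2. f j) = f 0 + f (1::nat)" for f :: "nat \<Rightarrow> real"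
  by (simp add: numeral_2_eq_2)

lemma emb_eq: "(\<Sum>k<1. TH k * emb 2 WW X i k) = WW 0 i * X 0 0 + WW 1 i * X 1 0"
  by (simp add: emb_def TH_def sum2)

lemma cost1: "cost (Suc 0) x y = \<bar>x 0 - y 0\<bar>"
  by (simp add: cost_def)

lemma clf_eq: "clf (Suc 0) 2 WW TH 0 X i = (if WW 0 i * X 0 0 + WW 1 i * X 1 0 \<ge> 0 then 1 else -1)"
  unfolding clf_def One_nat_def[symmetric] emb_eq by simp

lemma step1: "step 1 2 WW TH 0 X1 X1"
  by (auto simp: step_def clf_eq X1_def)

lemma feas0: "\<not> feasible 1 2 WW TH 0 X0 0 y"
proof
  assume "feasible 1 2 WW TH 0 X0 0 y"
  then have a: "y 0 - 20 \<ge> 0" and c: "\<bar>y 0\<bar> \<le> 2"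
    by (auto simp: feasible_def clf_eq cost1 WW_def X0_def split: if_splits)
  then show False by linarith
qed

lemma feas1: "feasible 1 2 WW TH 0 X0 1 y \<longleftrightarrow> y \<in> vecs 1 \<and> y 0 \<ge> 0 \<and> \<bar>-1 - y 0\<bar> \<le> 2"
  by (auto simp: feasible_def clf_eq cost1 WW_def X0_def split: if_splits)

lemma step0: "step 1 2 WW TH 0 X0 X1"
  unfolding step_def
proof (intro allI impI)
  fix i :: nat assume "i < 2"
  then have "i = 0 \<or> i = 1" by auto
  then show "if clf 1 2 WW TH 0 X0 i = -1 \<and> (\<exists>x'. feasible 1 2 WW TH 0 X0 i x')
            then best_resp 1 2 WW TH 0 X0 i (X1 i) else X1 i = X0 i"
  proof
    assume "i = 0" then show ?thesis using feas0 by (auto simp: X1_def X0_def)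
  next
    assume i: "i = 1"
    have "best_resp 1 2 WW TH 0 X0 1 (X1 1)"
      unfolding best_resp_def feas1
      by (auto simp: X1_def vecs_def cost1 X0_def)
    moreover have "clf 1 2 WW TH 0 X0 1 = -1" by (simp add: clf_eq WW_def X0_def)
    moreover have "feasible 1 2 WW TH 0 X0 1 (X1 1)" unfolding feas1
      by (auto simp: X1_def vecs_def)
    ultimately show ?thesis using i by auto
  qed
qed

theorem proposition2:
  shows "\<exists>l n W theta b Xs i t. trajectory l n W theta b Xs \<and> i < n \<and>
           clf l n W theta b (Xs t) i = -1 \<and>
           Xs (Suc t) i = Xs t i \<and>
           clf l n W theta b (Xs (Suc t)) i = 1"
proof -
  have tr: "trajectory 1 2 WW TH 0 XS"
    unfolding trajectory_def
  proof (intro conjI allI impI)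
    show "TH \<in> vecs 1" by (simp add: vecs_def TH_def)
    show "\<And>i j. i < 2 \<Longrightarrow> j < 2 \<Longrightarrow> 0 \<le> WW j i" by (simp add: WW_def)
    show "\<And>i. i < 2 \<Longrightarrow> XS 0 i \<in> vecs 1" by (simp add: vecs_def XS_def X0_def)
    show "\<And>t. step 1 2 WW TH 0 (XS t) (XS (Suc t))"
      using step0 step1 by (simp add: XS_def)
  qed
  have "clf 1 2 WW TH 0 (XS 0) 0 = -1" by (simp add: clf_eq XS_def WW_def X0_def)
  moreover have "XS (Suc 0) 0 = XS 0 0" by (simp add: XS_def X0_def X1_def fun_eq_iff)
  moreover have "clf 1 2 WW TH 0 (XS (Suc 0)) 0 = 1" by (simp add: clf_eq XS_def X1_def)
  ultimately show ?thesis using tr by (intro exI[of _ 1] exI[of _ 2] exI[of _ WW] exI[of _ TH] exI[of _ 0] exI[of _ XS] exI[of _ "0::nat"]) simp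
qed

end
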